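(* Fix $P>0$. For $Q\in[0,Q^{\rm CSIR}_{\max}]$ let (P1)$_Q$ denote problem (P1) with energy threshold $Q$. Let $Q_x,Q_y\in[0,Q^{\rm CSIR}_{\max}]$ and suppose $\rho^*_x$ and $\rho^*_y$ are optimal policies of (P1)$_{Q_x}$ and (P1)$_{Q_y}$, respectively. Then for every $\theta\in[0,1]$ there exists a policy $\rho_z$ with values in $[0,1]$ such that $$\mathbb{E}\big[Q^{\rm NL}_\nu(P,\rho_{z,\nu})\big]\ge \theta Q_x+(1-\theta)Q_y,\qquad \mathbb{E}\big[R_\nu(P,\rho_{z,\nu})\big]\ge \theta\,\mathbb{E}\big[R_\nu(P,\rho^*_{x,\nu})\big]+(1-\theta)\,\mathbb{E}\big[R_\nu(P,\rho^*_{y,\nu})\big].$$ (That is, (P1) satisfies the time-sharing condition.)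
   Context: Standing model: constants $a,b,P_s,T,\sigma^2>0$ are fixed and $\Omega=1/(1+e^{ab})$. Fading is modeled on a probability space carrying independent random variables $h$ (channel power gain, values in $(0,\infty)$, $\mathbb{E}[h]<\infty$) and $U$ (uniform on $[0,1]$). A fading state is $\nu=(h_\nu,U_\nu)$, distributed as $(h,U)$; $\mathbb{E}$ is expectation over the fading state. A policy is a Borel measurable function of the fading state. For a fading state with gain $h_\nu$, transmit power $p\ge0$ and power-splitting ratio $\rho\in[0,1]$: $R_\nu(p,\rho)=\ln\big(1+(1-\rho)h_\nu p/\sigma^2\big)$ (rate, in nats); $\Psi_\nu(p,\rho)=1/(1+e^{-a(\rho h_\nu p-b)})$; $Q^{\rm NL}_\nu(p,\rho)=P_sT(\Psi_\nu(p,\rho)-\Omega)/(1-\Omega)$ (harvested energy). Problem (P1) (fixed transmit power $P>0$, threshold $Q\in[0,Q^{\rm CSIR}_{\max}]$ where $Q^{\rm CSIR}_{\max}=\mathbb{E}[Q^{\rm NL}_\nu(P,1)]$): maximize $\mathbb{E}[R_\nu(P,\rho_\nu)]$ over policies $\rho$ with values in $[0,1]$ subject to $\mathbb{E}[Q^{\rm NL}_\nu(P,\rho_\nu)]\ge Q$. *)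

theory Defs
  imports "HOL-Probability.Probability"
begin

text \<open>Fading state nu = (h_nu, U_nu) :: real \<times> real.  Expectation over the fading
  state is taken on the underlying probability space M carrying h and U.\<close>

definition Omega :: "real \<Rightarrow> real \<Rightarrow> real" where
  "Omega a b = 1 / (1 + exp (a * b))"

definition rate :: "real \<Rightarrow> real \<Rightarrow> real \<Rightarrow> real \<Rightarrow> real" where
  "rate \<sigma>2 hv p \<rho> = ln (1 + (1 - \<rho>) * hv * p / \<sigma>2)"

definition Psi :: "real \<Rightarrow> real \<Rightarrow> real \<Rightarrow> real \<Rightarrow> real \<Rightarrow> real" where
  "Psi a b hv p \<rho> = 1 / (1 + exp (- a * (\<rho> * hv * p - b)))"

definition QNL :: "real \<Rightarrow> real \<Rightarrow> real \<Rightarrow> real \<Rightarrow> real \<Rightarrow> real \<Rightarrow> real \<Rightarrow> real" where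
  "QNL a b Ps T hv p \<rho> = Ps * T * (Psi a b hv p \<rho> - Omega a b) / (1 - Omega a b)"

definition fexp :: "'s measure \<Rightarrow> ('s \<Rightarrow> real) \<Rightarrow> ('s \<Rightarrow> real) \<Rightarrow> (real \<times> real \<Rightarrow> real) \<Rightarrow> real" where
  "fexp M h U f = (\<integral>\<omega>. f (h \<omega>, U \<omega>) \<partial>M)"

definition is_policy :: "(real \<times> real \<Rightarrow> real) \<Rightarrow> bool" where
  "is_policy \<rho> \<longleftrightarrow> \<rho> \<in> borel_measurable borel \<and> (\<forall>\<nu>. \<rho> \<nu> \<in> {0..1})"

definition ER :: "'s measure \<Rightarrow> ('s \<Rightarrow> real) \<Rightarrow> ('s \<Rightarrow> real) \<Rightarrow> real \<Rightarrow> real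
    \<Rightarrow> (real \<times> real \<Rightarrow> real) \<Rightarrow> real" where
  "ER M h U \<sigma>2 P \<rho> = fexp M h U (\<lambda>\<nu>. rate \<sigma>2 (fst \<nu>) P (\<rho> \<nu>))"

definition EQ :: "'s measure \<Rightarrow> ('s \<Rightarrow> real) \<Rightarrow> ('s \<Rightarrow> real) \<Rightarrow> real \<Rightarrow> real \<Rightarrow> real \<Rightarrow> real
    \<Rightarrow> real \<Rightarrow> (real \<times> real \<Rightarrow> real) \<Rightarrow> real" where
  "EQ M h U a b Ps T P \<rho> = fexp M h U (\<lambda>\<nu>. QNL a b Ps T (fst \<nu>) P (\<rho> \<nu>))"

definition Qmax_CSIR :: "'s measure \<Rightarrow> ('s \<Rightarrow> real) \<Rightarrow> ('s \<Rightarrow> real) \<Rightarrow> real \<Rightarrow> real \<Rightarrow> real \<Rightarrow> real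
    \<Rightarrow> real \<Rightarrow> real" where
  "Qmax_CSIR M h U a b Ps T P = EQ M h U a b Ps T P (\<lambda>_. 1)"

definition P1_feasible where
  "P1_feasible M h U a b Ps T P Q \<rho> \<longleftrightarrow> is_policy \<rho> \<and> EQ M h U a b Ps T P \<rho> \<ge> Q"

definition P1_optimal where
  "P1_optimal M h U a b Ps T \<sigma>2 P Q \<rho> \<longleftrightarrow> P1_feasible M h U a b Ps T P Q \<rho> \<and>
     (\<forall>\<rho>'. P1_feasible M h U a b Ps T P Q \<rho>' \<longrightarrow> ER M h U \<sigma>2 P \<rho>' \<le> ER M h U \<sigma>2 P \<rho>)"

end

theory Submission
  imports Defs
begin


lemma L1:
  fixes g g' :: "real \<Rightarrow> real" and \<theta> :: real
  assumes th: "0 < \<theta>" "\<theta> < 1"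
    and [measurable]: "g \<in> borel_measurable borel" "g' \<in> borel_measurable borel"
    and ig: "integrable lborel (\<lambda>u. indicator {0..1} u * g u)"
    and ig': "integrable lborel (\<lambda>u. indicator {0..1} u * g' u)"
  shows "integrable lborel (\<lambda>u. indicator {0..1} u * (if u \<le> \<theta> then g (u/\<theta>) else g' ((u-\<theta>)/(1-\<theta>))))
     \<and> (\<integral>u. indicator {0..1} u * (if u \<le> \<theta> then g (u/\<theta>) else g' ((u-\<theta>)/(1-\<theta>))) \<partial>lborel)
       = \<theta> * (\<integral>u. indicator {0..1} u * g u \<partial>lborel) + (1-\<theta>) * (\<integral>u. indicator {0..1} u * g' u \<partial>lborel)"
proof -
  define A where "A u = indicator {0..\<theta>} u * g (u/\<theta>)" for u :: real
  define B where "B u = indicator {\<theta><..1} u * g' ((u-\<theta>)/(1-\<theta>))" for u :: real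
  have eq: "(\<lambda>u. indicator {0..1} u * (if u \<le> \<theta> then g (u/\<theta>) else g' ((u-\<theta>)/(1-\<theta>)))) = (\<lambda>u. A u + B u)"
    using th by (auto simp: A_def B_def indicator_def fun_eq_iff)
  have A1: "(\<lambda>x. A (0 + \<theta> * x)) = (\<lambda>u. indicator {0..1} u * g u)"
    using th by (auto simp: A_def indicator_def fun_eq_iff zero_le_mult_iff)
  have ae: "AE x in lborel. B (\<theta> + (1-\<theta>) * x) = indicator {0..1} x * g' x"
    using AE_lborel_singleton[of "0::real"]
  proof eventually_elim
    case (elim x)
    have "\<theta> < \<theta> + (1-\<theta>)*x \<longleftrightarrow> 0 < x" using th by (simp add: mult_pos_pos zero_less_mult_iff)
    moreover have "\<theta> + (1-\<theta>)*x \<le> 1 \<longleftrightarrow> (1-\<theta>)*x \<le> (1-\<theta>)*1" by argo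
    moreover have "(1-\<theta>)*x \<le> (1-\<theta>)*1 \<longleftrightarrow> x \<le> 1" using th by (intro mult_le_cancel_left_pos) simp
    ultimately show ?case using th elim by (auto simp: B_def indicator_def)
  qed
  have iA: "integrable lborel A"
    using lborel_integrable_real_affine_iff[of \<theta> A 0] th A1 ig by simp
  have iB1: "integrable lborel (\<lambda>x. B (\<theta> + (1-\<theta>) * x))"
    using integrable_cong_AE[OF _ _ ae] ig' by (simp add: B_def)
  have iB: "integrable lborel B"
    using lborel_integrable_real_affine_iff[of "1-\<theta>" B \<theta>] th iB1 by simp
  have IA: "(\<integral>u. A u \<partial>lborel) = \<theta> * (\<integral>u. indicator {0..1} u * g u \<partial>lborel)"
    using lborel_integral_real_affine[of \<theta> A 0] th A1 by simp
  have IB: "(\<integral>u. B u \<partial>lborel) = (1-\<theta>) * (\<integral>u. indicator {0..1} u * g' u \<partial>lborel)"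
    using lborel_integral_real_affine[of "1-\<theta>" B \<theta>] th integral_cong_AE[OF _ _ ae]
    by (simp add: B_def)
  show ?thesis unfolding eq using iA iB IA IB by simp
qed




lemma L2:
  fixes M :: "'s measure" and h U :: "'s \<Rightarrow> real" and \<theta> :: real
    and Fx Fy Fz :: "real \<times> real \<Rightarrow> real"
  assumes "prob_space M"
    and hm[measurable]: "h \<in> borel_measurable M"
    and dU: "distributed M lborel U (indicator {0..1})"
    and ind: "prob_space.indep_var M borel h borel U"
    and th: "0 < \<theta>" "\<theta> < 1"
    and Fxm[measurable]: "Fx \<in> borel_measurable borel" and Fym[measurable]: "Fy \<in> borel_measurable borel"
    and ix: "integrable M (\<lambda>\<omega>. Fx (h \<omega>, U \<omega>))" and iy: "integrable M (\<lambda>\<omega>. Fy (h \<omega>, U \<omega>))"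
    and Fz: "\<And>\<nu>. Fz \<nu> = (if snd \<nu> \<le> \<theta> then Fx (fst \<nu>, snd \<nu> / \<theta>) else Fy (fst \<nu>, (snd \<nu> - \<theta>)/(1-\<theta>)))"
    and iz: "integrable M (\<lambda>\<omega>. Fz (h \<omega>, U \<omega>))"
  shows "fexp M h U Fz = \<theta> * fexp M h U Fx + (1-\<theta>) * fexp M h U Fy"
proof -
  interpret prob_space M by fact
  have Fzeq: "Fz = (\<lambda>\<nu>. if snd \<nu> \<le> \<theta> then Fx (fst \<nu>, snd \<nu> / \<theta>) else Fy (fst \<nu>, (snd \<nu> - \<theta>)/(1-\<theta>)))"
    using Fz by auto
  have Fxm'[measurable]: "Fx \<in> borel_measurable (borel \<Otimes>\<^sub>M borel)" using Fxm by (simp add: borel_prod)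
  have Fym'[measurable]: "Fy \<in> borel_measurable (borel \<Otimes>\<^sub>M borel)" using Fym by (simp add: borel_prod)
  have "Fz \<in> borel_measurable (borel \<Otimes>\<^sub>M borel)" unfolding Fzeq by measurable
  then have Fzm[measurable]: "Fz \<in> borel_measurable borel" by (simp add: borel_prod)
  have Fzm'[measurable]: "Fz \<in> borel_measurable (borel \<Otimes>\<^sub>M borel)" by fact
  have Um[measurable]: "U \<in> borel_measurable M"
    using distributed_measurable[OF dU] by simp
  define Dh where "Dh = distr M borel h"
  define DU where "DU = distr M borel U"
  have DUeq: "DU = density lborel (\<lambda>x. ennreal (indicator {0..1} x))"
  proof -
    have "DU = distr M lborel U" unfolding DU_def by (rule distr_cong) auto
    also have "\<dots> = density lborel (indicator {0..1})"
      using dU by (simp add: distributed_def)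
    finally show ?thesis by (simp add: ennreal_indicator)
  qed
  interpret Ph: prob_space Dh unfolding Dh_def by (rule prob_space_distr) simp
  interpret PU: prob_space DU unfolding DU_def by (rule prob_space_distr) simp
  interpret P: pair_prob_space Dh DU ..
  have N: "Dh \<Otimes>\<^sub>M DU = distr M (borel \<Otimes>\<^sub>M borel) (\<lambda>\<omega>. (h \<omega>, U \<omega>))"
    using ind unfolding indep_var_distribution_eq Dh_def DU_def by simp
  have pm: "(\<lambda>\<omega>. (h \<omega>, U \<omega>)) \<in> measurable M (borel \<Otimes>\<^sub>M borel)" by measurable
  have transfer: "integrable (Dh \<Otimes>\<^sub>M DU) F \<and> fexp M h U F = (\<integral>x. (\<integral>y. F (x, y) \<partial>DU) \<partial>Dh)"
    if Fm: "F \<in> borel_measurable borel" and iF: "integrable M (\<lambda>\<omega>. F (h \<omega>, U \<omega>))" for F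
  proof -
    have Fm': "F \<in> borel_measurable (borel \<Otimes>\<^sub>M borel)" using Fm by (simp add: borel_prod)
    have i: "integrable (Dh \<Otimes>\<^sub>M DU) F"
      unfolding N using integrable_distr_eq[OF pm Fm'] iF by simp
    have "fexp M h U F = integral\<^sup>L (Dh \<Otimes>\<^sub>M DU) F"
      unfolding N fexp_def using integral_distr[OF pm Fm'] by simp
    also have "\<dots> = (\<integral>x. (\<integral>y. F (x, y) \<partial>DU) \<partial>Dh)"
      using P.integral_fst'[OF i] by simp
    finally show ?thesis using i by simp
  qed
  have inner: "integrable DU g \<longleftrightarrow> integrable lborel (\<lambda>u. indicator {0..1} u * g u)"
    "integral\<^sup>L DU g = (\<integral>u. indicator {0..1} u * g u \<partial>lborel)"
    if [measurable]: "g \<in> borel_measurable borel" for g :: "real \<Rightarrow> real"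
    unfolding DUeq
    by (subst integrable_density; simp)+ (subst integral_density; simp)
  obtain ix': "integrable (Dh \<Otimes>\<^sub>M DU) Fx" and ex: "fexp M h U Fx = (\<integral>x. (\<integral>y. Fx (x, y) \<partial>DU) \<partial>Dh)"
    using transfer[OF Fxm ix] by blast
  obtain iy': "integrable (Dh \<Otimes>\<^sub>M DU) Fy" and ey: "fexp M h U Fy = (\<integral>x. (\<integral>y. Fy (x, y) \<partial>DU) \<partial>Dh)"
    using transfer[OF Fym iy] by blast
  obtain iz': "integrable (Dh \<Otimes>\<^sub>M DU) Fz" and ez: "fexp M h U Fz = (\<integral>x. (\<integral>y. Fz (x, y) \<partial>DU) \<partial>Dh)"
    using transfer[OF Fzm iz] by blast
  have mz: "(\<lambda>x. (\<integral>y. Fz (x, y) \<partial>DU)) \<in> borel_measurable Dh"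
    using P.integrable_fst'[OF iz'] by (rule borel_measurable_integrable)
  have mxy: "(\<lambda>x. \<theta> * (\<integral>y. Fx (x, y) \<partial>DU) + (1-\<theta>) * (\<integral>y. Fy (x, y) \<partial>DU)) \<in> borel_measurable Dh"
    using P.integrable_fst'[OF ix'] P.integrable_fst'[OF iy'] by (intro borel_measurable_integrable) simp
  have "AE x in Dh. (\<integral>y. Fz (x, y) \<partial>DU) = \<theta> * (\<integral>y. Fx (x, y) \<partial>DU) + (1-\<theta>) * (\<integral>y. Fy (x, y) \<partial>DU)"
    using P.AE_integrable_fst'[OF ix'] P.AE_integrable_fst'[OF iy']
  proof eventually_elim
    case (elim x)
    have m1[measurable]: "(\<lambda>y. Fx (x, y)) \<in> borel_measurable borel" by measurable
    have m2[measurable]: "(\<lambda>y. Fy (x, y)) \<in> borel_measurable borel" by measurable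
    have m3[measurable]: "(\<lambda>y. Fz (x, y)) \<in> borel_measurable borel" by measurable
    have a: "integrable lborel (\<lambda>u. indicator {0..1} u * Fx (x, u))" using elim inner(1)[OF m1] by simp
    have b: "integrable lborel (\<lambda>u. indicator {0..1} u * Fy (x, u))" using elim inner(1)[OF m2] by simp
    have fz: "(\<lambda>y. Fz (x, y)) = (\<lambda>u. if u \<le> \<theta> then Fx (x, u/\<theta>) else Fy (x, (u-\<theta>)/(1-\<theta>)))"
      by (rule ext) (simp add: Fz)
    have fz2: "(\<lambda>u. indicator {0..1} u * Fz (x, u)) = (\<lambda>u. indicator {0..1} u * (if u \<le> \<theta> then Fx (x, u/\<theta>) else Fy (x, (u-\<theta>)/(1-\<theta>))))"
      by (rule ext) (simp add: Fz)
    from L1[OF th m1 m2 a b] show ?case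
      using inner(2)[OF m1] inner(2)[OF m2] inner(2)[OF m3] unfolding fz fz2 by simp
  qed
  then have "(\<integral>x. (\<integral>y. Fz (x, y) \<partial>DU) \<partial>Dh) = (\<integral>x. \<theta> * (\<integral>y. Fx (x, y) \<partial>DU) + (1-\<theta>) * (\<integral>y. Fy (x, y) \<partial>DU) \<partial>Dh)"
    by (rule integral_cong_AE[OF mz mxy])
  also have "\<dots> = \<theta> * (\<integral>x. (\<integral>y. Fx (x, y) \<partial>DU) \<partial>Dh) + (1-\<theta>) * (\<integral>x. (\<integral>y. Fy (x, y) \<partial>DU) \<partial>Dh)"
    using P.integrable_fst'[OF ix'] P.integrable_fst'[OF iy'] by simp
  finally show ?thesis using ex ey ez by simp
qed




lemma Psi_bounds: "0 \<le> Psi a b hv p r \<and> Psi a b hv p r \<le> 1"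
  unfolding Psi_def by (simp add: add_pos_nonneg)

lemma Omega_bounds: "0 < Omega a b \<and> Omega a b < 1"
  unfolding Omega_def by (simp add: add_pos_pos)

lemma QNL_bound: assumes "Ps > 0" "T > 0"
  shows "\<bar>QNL a b Ps T hv p r\<bar> \<le> Ps * T / (1 - Omega a b)"
proof -
  have o: "0 < 1 - Omega a b" using Omega_bounds[of a b] by simp
  have d: "\<bar>Psi a b hv p r - Omega a b\<bar> \<le> 1" using Psi_bounds[of a b hv p r] Omega_bounds[of a b] by linarith
  have "\<bar>QNL a b Ps T hv p r\<bar> = Ps * T * \<bar>Psi a b hv p r - Omega a b\<bar> / (1 - Omega a b)"
    unfolding QNL_def using assms o by (simp add: abs_mult abs_divide)
  also have "\<dots> \<le> Ps * T * 1 / (1 - Omega a b)"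
    using assms o d by (intro divide_right_mono mult_left_mono) auto
  finally show ?thesis by simp
qed

lemma rate_bound: assumes "hv > 0" "p > 0" "\<sigma>2 > 0" "r \<in> {0..1}"
  shows "\<bar>rate \<sigma>2 hv p r\<bar> \<le> hv * p / \<sigma>2"
proof -
  have x: "0 \<le> (1 - r) * hv * p / \<sigma>2" using assms by auto
  have le: "(1 - r) * hv * p / \<sigma>2 \<le> hv * p / \<sigma>2"
    using assms by (intro divide_right_mono) (auto simp: mult_le_cancel_right1 mult.assoc intro: mult_left_le_one_le)
  have "0 \<le> ln (1 + (1 - r) * hv * p / \<sigma>2)" using x by simp
  moreover have "ln (1 + (1 - r) * hv * p / \<sigma>2) \<le> (1 - r) * hv * p / \<sigma>2"
    using ln_le_minus_one[of "1 + (1 - r) * hv * p / \<sigma>2"] x by simp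
  ultimately show ?thesis using le unfolding rate_def by simp
qed




lemma pol_meas: "is_policy \<rho> \<Longrightarrow> \<rho> \<in> borel_measurable (borel \<Otimes>\<^sub>M borel)"
  unfolding is_policy_def by (simp add: borel_prod)

lemma QNL_meas: assumes [measurable]: "\<rho> \<in> borel_measurable (borel \<Otimes>\<^sub>M borel)"
  shows "(\<lambda>\<nu>::real\<times>real. QNL a b Ps T (fst \<nu>) P (\<rho> \<nu>)) \<in> borel_measurable (borel \<Otimes>\<^sub>M borel)"
  unfolding QNL_def Psi_def by measurable

lemma rate_meas: assumes [measurable]: "\<rho> \<in> borel_measurable (borel \<Otimes>\<^sub>M borel)"
  shows "(\<lambda>\<nu>::real\<times>real. rate \<sigma>2 (fst \<nu>) P (\<rho> \<nu>)) \<in> borel_measurable (borel \<Otimes>\<^sub>M borel)"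
  unfolding rate_def by measurable

lemma intQ:
  fixes h U :: "'s \<Rightarrow> real" and \<rho> :: "real \<times> real \<Rightarrow> real"
  assumes "prob_space M" "h \<in> borel_measurable M" "U \<in> borel_measurable M"
    and "\<rho> \<in> borel_measurable (borel \<Otimes>\<^sub>M borel)" "Ps > 0" "T > 0"
  shows "integrable M (\<lambda>\<omega>. QNL a b Ps T (h \<omega>) P (\<rho> (h \<omega>, U \<omega>)))"
proof -
  interpret prob_space M by fact
  have [measurable]: "(\<lambda>\<nu>::real\<times>real. QNL a b Ps T (fst \<nu>) P (\<rho> \<nu>)) \<in> borel_measurable (borel \<Otimes>\<^sub>M borel)"
    by (rule QNL_meas) fact
  have [measurable]: "h \<in> borel_measurable M" "U \<in> borel_measurable M" by fact+
  have m: "(\<lambda>\<omega>. (\<lambda>\<nu>::real\<times>real. QNL a b Ps T (fst \<nu>) P (\<rho> \<nu>)) (h \<omega>, U \<omega>)) \<in> borel_measurable M"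
    by measurable
  show ?thesis
    by (rule integrable_const_bound[where B="Ps * T / (1 - Omega a b)"])
       (use m QNL_bound[OF assms(5,6)] in auto)
qed

lemma intR:
  fixes h U :: "'s \<Rightarrow> real" and \<rho> :: "real \<times> real \<Rightarrow> real"
  assumes "prob_space M" "h \<in> borel_measurable M" "U \<in> borel_measurable M"
    and "\<rho> \<in> borel_measurable (borel \<Otimes>\<^sub>M borel)" "\<forall>\<nu>. \<rho> \<nu> \<in> {0..1}"
    and "\<forall>\<omega>\<in>space M. h \<omega> > 0" "integrable M h" "P > 0" "\<sigma>2 > 0"
  shows "integrable M (\<lambda>\<omega>. rate \<sigma>2 (h \<omega>) P (\<rho> (h \<omega>, U \<omega>)))"
proof -
  interpret prob_space M by fact
  have [measurable]: "(\<lambda>\<nu>::real\<times>real. rate \<sigma>2 (fst \<nu>) P (\<rho> \<nu>)) \<in> borel_measurable (borel \<Otimes>\<^sub>M borel)"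
    by (rule rate_meas) fact
  have [measurable]: "h \<in> borel_measurable M" "U \<in> borel_measurable M" by fact+
  have m: "(\<lambda>\<omega>. (\<lambda>\<nu>::real\<times>real. rate \<sigma>2 (fst \<nu>) P (\<rho> \<nu>)) (h \<omega>, U \<omega>)) \<in> borel_measurable M"
    by measurable
  have i: "integrable M (\<lambda>\<omega>. h \<omega> * P / \<sigma>2)" using assms(7) by simp
  show ?thesis
  proof (rule Bochner_Integration.integrable_bound[OF i])
    show "(\<lambda>\<omega>. rate \<sigma>2 (h \<omega>) P (\<rho> (h \<omega>, U \<omega>))) \<in> borel_measurable M" using m by simp
    show "AE x in M. norm (rate \<sigma>2 (h x) P (\<rho> (h x, U x))) \<le> norm (h x * P / \<sigma>2)"
    proof (rule AE_I2)
      fix x assume x: "x \<in> space M"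
      have "\<bar>rate \<sigma>2 (h x) P (\<rho> (h x, U x))\<bar> \<le> h x * P / \<sigma>2"
        using rate_bound[of "h x" P \<sigma>2 "\<rho> (h x, U x)"] assms x by auto
      moreover have "h x * P / \<sigma>2 \<ge> 0" using assms x by auto
      ultimately show "norm (rate \<sigma>2 (h x) P (\<rho> (h x, U x))) \<le> norm (h x * P / \<sigma>2)"
        by (simp only: real_norm_def)
    qed
  qed
qed


theorem lemma1:
  fixes M :: "'s measure" and h U :: "'s \<Rightarrow> real"
    and a b Ps T \<sigma>2 P Qx Qy \<theta> :: real and \<rho>x \<rho>y :: "real \<times> real \<Rightarrow> real"
  assumes "prob_space M"
    and "h \<in> borel_measurable M" and "\<forall>\<omega>\<in>space M. h \<omega> > 0" and "integrable M h"
    and "distributed M lborel U (indicator {0..1})"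
    and "prob_space.indep_var M borel h borel U"
    and "a > 0" "b > 0" "Ps > 0" "T > 0" "\<sigma>2 > 0" "P > 0"
    and "Qx \<in> {0..Qmax_CSIR M h U a b Ps T P}" "Qy \<in> {0..Qmax_CSIR M h U a b Ps T P}"
    and "P1_optimal M h U a b Ps T \<sigma>2 P Qx \<rho>x"
    and "P1_optimal M h U a b Ps T \<sigma>2 P Qy \<rho>y"
    and "\<theta> \<in> {0..1}"
  shows "\<exists>\<rho>z. is_policy \<rho>z \<and>
           EQ M h U a b Ps T P \<rho>z \<ge> \<theta> * Qx + (1 - \<theta>) * Qy \<and>
           ER M h U \<sigma>2 P \<rho>z \<ge> \<theta> * ER M h U \<sigma>2 P \<rho>x + (1 - \<theta>) * ER M h U \<sigma>2 P \<rho>y"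
proof -
  have px: "is_policy \<rho>x" and qx: "EQ M h U a b Ps T P \<rho>x \<ge> Qx"
    using assms(15) unfolding P1_optimal_def P1_feasible_def by auto
  have py: "is_policy \<rho>y" and qy: "EQ M h U a b Ps T P \<rho>y \<ge> Qy"
    using assms(16) unfolding P1_optimal_def P1_feasible_def by auto
  consider "\<theta> = 0" | "\<theta> = 1" | "0 < \<theta> \<and> \<theta> < 1" using assms(17) by fastforce
  then show ?thesis
  proof cases
    case 1 then show ?thesis using py qy by (intro exI[of _ \<rho>y]) auto
  next
    case 2 then show ?thesis using px qx by (intro exI[of _ \<rho>x]) auto
  next
    case 3
    then have th: "0 < \<theta>" "\<theta> < 1" by auto
    have Um: "U \<in> borel_measurable M"
      using distributed_measurable[OF assms(5)] by simp
    have rxm[measurable]: "\<rho>x \<in> borel_measurable (borel \<Otimes>\<^sub>M borel)" using pol_meas[OF px] .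
    have rym[measurable]: "\<rho>y \<in> borel_measurable (borel \<Otimes>\<^sub>M borel)" using pol_meas[OF py] .
    define \<rho>z where "\<rho>z \<nu> = (if snd \<nu> \<le> \<theta> then \<rho>x (fst \<nu>, snd \<nu> / \<theta>) else \<rho>y (fst \<nu>, (snd \<nu> - \<theta>)/(1-\<theta>)))"
      for \<nu> :: "real \<times> real"
    have rzm[measurable]: "\<rho>z \<in> borel_measurable (borel \<Otimes>\<^sub>M borel)"
      unfolding \<rho>z_def[abs_def] by measurable
    have rzr: "\<forall>\<nu>. \<rho>z \<nu> \<in> {0..1}"
      using px py unfolding is_policy_def \<rho>z_def by auto
    have pz: "is_policy \<rho>z" using rzm rzr unfolding is_policy_def by (simp add: borel_prod)
    have rxr: "\<forall>\<nu>. \<rho>x \<nu> \<in> {0..1}" and ryr: "\<forall>\<nu>. \<rho>y \<nu> \<in> {0..1}"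
      using px py unfolding is_policy_def by auto
    have EQz: "EQ M h U a b Ps T P \<rho>z = \<theta> * EQ M h U a b Ps T P \<rho>x + (1-\<theta>) * EQ M h U a b Ps T P \<rho>y"
      unfolding EQ_def
    proof (rule L2[OF assms(1,2,5,6) th])
      show "(\<lambda>\<nu>. QNL a b Ps T (fst \<nu>) P (\<rho>x \<nu>)) \<in> borel_measurable borel"
        using QNL_meas[OF rxm] by (simp add: borel_prod)
      show "(\<lambda>\<nu>. QNL a b Ps T (fst \<nu>) P (\<rho>y \<nu>)) \<in> borel_measurable borel"
        using QNL_meas[OF rym] by (simp add: borel_prod)
      show "integrable M (\<lambda>\<omega>. QNL a b Ps T (fst (h \<omega>, U \<omega>)) P (\<rho>x (h \<omega>, U \<omega>)))"
        using intQ[OF assms(1,2) Um rxm assms(9,10)] by simp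
      show "integrable M (\<lambda>\<omega>. QNL a b Ps T (fst (h \<omega>, U \<omega>)) P (\<rho>y (h \<omega>, U \<omega>)))"
        using intQ[OF assms(1,2) Um rym assms(9,10)] by simp
      show "integrable M (\<lambda>\<omega>. QNL a b Ps T (fst (h \<omega>, U \<omega>)) P (\<rho>z (h \<omega>, U \<omega>)))"
        using intQ[OF assms(1,2) Um rzm assms(9,10)] by simp
      fix \<nu> :: "real \<times> real"
      show "QNL a b Ps T (fst \<nu>) P (\<rho>z \<nu>) = (if snd \<nu> \<le> \<theta> then QNL a b Ps T (fst (fst \<nu>, snd \<nu> / \<theta>)) P (\<rho>x (fst \<nu>, snd \<nu> / \<theta>))
          else QNL a b Ps T (fst (fst \<nu>, (snd \<nu> - \<theta>) / (1 - \<theta>))) P (\<rho>y (fst \<nu>, (snd \<nu> - \<theta>) / (1 - \<theta>))))"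
        unfolding \<rho>z_def by simp
    qed
    have ERz: "ER M h U \<sigma>2 P \<rho>z = \<theta> * ER M h U \<sigma>2 P \<rho>x + (1-\<theta>) * ER M h U \<sigma>2 P \<rho>y"
      unfolding ER_def
    proof (rule L2[OF assms(1,2,5,6) th])
      show "(\<lambda>\<nu>. rate \<sigma>2 (fst \<nu>) P (\<rho>x \<nu>)) \<in> borel_measurable borel"
        using rate_meas[OF rxm] by (simp add: borel_prod)
      show "(\<lambda>\<nu>. rate \<sigma>2 (fst \<nu>) P (\<rho>y \<nu>)) \<in> borel_measurable borel"
        using rate_meas[OF rym] by (simp add: borel_prod)
      show "integrable M (\<lambda>\<omega>. rate \<sigma>2 (fst (h \<omega>, U \<omega>)) P (\<rho>x (h \<omega>, U \<omega>)))"
        using intR[OF assms(1,2) Um rxm rxr assms(3,4,12,11)] by simp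
      show "integrable M (\<lambda>\<omega>. rate \<sigma>2 (fst (h \<omega>, U \<omega>)) P (\<rho>y (h \<omega>, U \<omega>)))"
        using intR[OF assms(1,2) Um rym ryr assms(3,4,12,11)] by simp
      show "integrable M (\<lambda>\<omega>. rate \<sigma>2 (fst (h \<omega>, U \<omega>)) P (\<rho>z (h \<omega>, U \<omega>)))"
        using intR[OF assms(1,2) Um rzm rzr assms(3,4,12,11)] by simp
      fix \<nu> :: "real \<times> real"
      show "rate \<sigma>2 (fst \<nu>) P (\<rho>z \<nu>) = (if snd \<nu> \<le> \<theta> then rate \<sigma>2 (fst (fst \<nu>, snd \<nu> / \<theta>)) P (\<rho>x (fst \<nu>, snd \<nu> / \<theta>))
          else rate \<sigma>2 (fst (fst \<nu>, (snd \<nu> - \<theta>) / (1 - \<theta>))) P (\<rho>y (fst \<nu>, (snd \<nu> - \<theta>) / (1 - \<theta>))))"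
        unfolding \<rho>z_def by simp
    qed
    have "\<theta> * Qx + (1 - \<theta>) * Qy \<le> EQ M h U a b Ps T P \<rho>z"
      unfolding EQz using qx qy th by (intro add_mono mult_left_mono) auto
    then show ?thesis using pz ERz by (intro exI[of _ \<rho>z]) auto
  qed
qed


end
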